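(* Let $2\le n_0\le n_1$ be integers. Let $k=\frac{\log n_1}{\log n_0}$ and let $x_0$ be the unique root of the equation $x-1-x^{\frac{k-1}{k}}=0$ in the interval $[1,\infty)$. Then $$ch(K_{n_0,n_1})\le \left\lceil \frac{\log n_1}{\log x_0}\right\rceil+1.$$
   Context: All logarithms are to base 2. For a graph $G=(V,E)$, the choice number $ch(G)$ is the minimum integer $k$ such that for every assignment of a list $S(v)$ of at least $k$ colors to each vertex $v\in V$, there is a proper vertex coloring of $G$ assigning to each vertex $v$ a color from $S(v)$. $K_{n_0,n_1}$ denotes the complete bipartite graph with parts of sizes $n_0$ and $n_1$. *)

theory Defs
  imports Complex_Main
begin

text \<open>A (simple, undirected) graph is given by a vertex set V and a symmetric
  edge relation E. Colours are natural numbers (any countably infinite palette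
  suffices since all lists are finite).\<close>

definition choosable :: "'v set \<Rightarrow> ('v \<Rightarrow> 'v \<Rightarrow> bool) \<Rightarrow> nat \<Rightarrow> bool" where
  "choosable V E k \<longleftrightarrow>
     (\<forall>S :: 'v \<Rightarrow> nat set.
        (\<forall>v\<in>V. finite (S v) \<and> card (S v) \<ge> k) \<longrightarrow>
        (\<exists>f :: 'v \<Rightarrow> nat. (\<forall>v\<in>V. f v \<in> S v) \<and>
                           (\<forall>u\<in>V. \<forall>v\<in>V. E u v \<longrightarrow> f u \<noteq> f v)))"

definition choice_number :: "'v set \<Rightarrow> ('v \<Rightarrow> 'v \<Rightarrow> bool) \<Rightarrow> nat" where
  "choice_number V E = (LEAST k. choosable V E k)"

definition Kbip_V :: "nat \<Rightarrow> nat \<Rightarrow> (nat + nat) set" where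
  "Kbip_V n0 n1 = Inl ` {..<n0} \<union> Inr ` {..<n1}"

definition Kbip_E :: "(nat + nat) \<Rightarrow> (nat + nat) \<Rightarrow> bool" where
  "Kbip_E u v \<longleftrightarrow> (isl u \<and> \<not> isl v) \<or> (\<not> isl u \<and> isl v)"

definition ch_Kbip :: "nat \<Rightarrow> nat \<Rightarrow> nat" where
  "ch_Kbip n0 n1 = choice_number (Kbip_V n0 n1) Kbip_E"

end

theory Submission
  imports Defs
begin

lemma key_sum:
  fixes g :: "'a \<Rightarrow> bool \<Rightarrow> real"
  assumes "finite C"
  shows "(\<Sum>A\<in>Pow C. \<Prod>c\<in>C. g c (c\<in>A)) = (\<Prod>c\<in>C. g c True + g c False)"
proof -
  have "(\<Prod>c\<in>C. g c True + g c False) =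
        (\<Sum>X\<in>Pow C. (\<Prod>x\<in>X. g x True) * (\<Prod>x\<in>C-X. g x False))"
    by (rule prod_add[OF assms])
  also have "\<dots> = (\<Sum>A\<in>Pow C. \<Prod>c\<in>C. g c (c\<in>A))"
  proof (rule sum.cong[OF refl])
    fix X assume X: "X \<in> Pow C"
    have fX: "finite X" using X assms finite_subset by auto
    have "(\<Prod>c\<in>C. g c (c\<in>X)) = (\<Prod>c\<in>X \<union> (C-X). g c (c\<in>X))"
      using X by (intro prod.cong) auto
    also have "\<dots> = (\<Prod>c\<in>X. g c (c\<in>X)) * (\<Prod>c\<in>C-X. g c (c\<in>X))"
      by (rule prod.union_disjoint) (use fX assms in auto)
    also have "\<dots> = (\<Prod>x\<in>X. g x True) * (\<Prod>x\<in>C-X. g x False)"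
      by (intro arg_cong2[where f="(*)"] prod.cong) auto
    finally show "(\<Prod>x\<in>X. g x True) * (\<Prod>x\<in>C-X. g x False) = (\<Prod>c\<in>C. g c (c\<in>X))" by simp
  qed
  finally show ?thesis by simp
qed

lemma prod_restr:
  fixes h :: "'a \<Rightarrow> real"
  assumes "finite C" "L \<subseteq> C"
  shows "(\<Prod>c\<in>C. if c \<in> L then h c else 1) = (\<Prod>c\<in>L. h c)"
proof -
  have "(\<Prod>c\<in>C. if c \<in> L then h c else 1) = prod h (C \<inter> L)"
    by (rule prod.inter_restrict[symmetric]) (rule assms)
  also have "C \<inter> L = L" using assms by auto
  finally show ?thesis .
qed

lemma prod_ind:
  assumes "finite L"
  shows "(\<Prod>c\<in>L. (of_bool (P c) :: real)) = of_bool (\<forall>c\<in>L. P c)"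
proof (cases "\<forall>c\<in>L. P c")
  case True then show ?thesis by simp
next
  case False
  then obtain c where "c \<in> L" "\<not> P c" by auto
  then show ?thesis using assms False by (subst prod_zero) auto
qed

definition wc :: "real \<Rightarrow> bool \<Rightarrow> real" where
  "wc p b = (if b then p else 1 - p)"

lemma sum_w:
  assumes "finite C"
  shows "(\<Sum>A\<in>Pow C. \<Prod>c\<in>C. wc p (c\<in>A)) = 1"
  using key_sum[OF assms, of "\<lambda>c b. wc p b"] by (simp add: wc_def)

lemma sum_w0:
  assumes "finite C" "L \<subseteq> C"
  shows "(\<Sum>A\<in>Pow C. of_bool (L \<inter> A = {}) * (\<Prod>c\<in>C. wc p (c\<in>A))) = (1 - p) ^ card L"
proof -
  have fL: "finite L" using assms finite_subset by auto
  have "(\<Sum>A\<in>Pow C. of_bool (L \<inter> A = {}) * (\<Prod>c\<in>C. wc p (c\<in>A)))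
     = (\<Sum>A\<in>Pow C. \<Prod>c\<in>C. (if c \<in> L then of_bool (\<not> (c\<in>A)) else 1) * wc p (c\<in>A))"
  proof (rule sum.cong[OF refl])
    fix A assume "A \<in> Pow C"
    have "(\<Prod>c\<in>C. (if c \<in> L then of_bool (\<not> (c\<in>A)) else 1) * wc p (c\<in>A))
      = (\<Prod>c\<in>C. (if c \<in> L then of_bool (\<not> (c\<in>A)) else 1)) * (\<Prod>c\<in>C. wc p (c\<in>A))"
      by (rule prod.distrib)
    also have "(\<Prod>c\<in>C. (if c \<in> L then of_bool (\<not> (c\<in>A)) else (1::real))) = (\<Prod>c\<in>L. of_bool (\<not> (c\<in>A)))"
      by (rule prod_restr[OF assms])
    also have "\<dots> = of_bool (L \<inter> A = {})" using prod_ind[OF fL, of "\<lambda>c. c \<notin> A"] by auto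
    finally show "of_bool (L \<inter> A = {}) * (\<Prod>c\<in>C. wc p (c\<in>A)) =
       (\<Prod>c\<in>C. (if c \<in> L then of_bool (\<not> (c\<in>A)) else 1) * wc p (c\<in>A))" by simp
  qed
  also have "\<dots> = (\<Prod>c\<in>C. (if c \<in> L then of_bool (\<not> True) else 1) * wc p True
                     + (if c \<in> L then of_bool (\<not> False) else 1) * wc p False)"
    by (rule key_sum[OF assms(1)])
  also have "\<dots> = (\<Prod>c\<in>C. if c \<in> L then 1 - p else 1)"
    by (intro prod.cong) (auto simp: wc_def)
  also have "\<dots> = (\<Prod>c\<in>L. 1 - p)" by (rule prod_restr[OF assms])
  finally show ?thesis by simp
qed

lemma sum_w1:
  assumes "finite C" "L \<subseteq> C"
  shows "(\<Sum>A\<in>Pow C. of_bool (L \<subseteq> A) * (\<Prod>c\<in>C. wc p (c\<in>A))) = p ^ card L"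
proof -
  have fL: "finite L" using assms finite_subset by auto
  have "(\<Sum>A\<in>Pow C. of_bool (L \<subseteq> A) * (\<Prod>c\<in>C. wc p (c\<in>A)))
     = (\<Sum>A\<in>Pow C. \<Prod>c\<in>C. (if c \<in> L then of_bool (c\<in>A) else 1) * wc p (c\<in>A))"
  proof (rule sum.cong[OF refl])
    fix A assume "A \<in> Pow C"
    have "(\<Prod>c\<in>C. (if c \<in> L then of_bool (c\<in>A) else 1) * wc p (c\<in>A))
      = (\<Prod>c\<in>C. (if c \<in> L then of_bool (c\<in>A) else 1)) * (\<Prod>c\<in>C. wc p (c\<in>A))"
      by (rule prod.distrib)
    also have "(\<Prod>c\<in>C. (if c \<in> L then of_bool (c\<in>A) else (1::real))) = (\<Prod>c\<in>L. of_bool (c\<in>A))"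
      by (rule prod_restr[OF assms])
    also have "\<dots> = of_bool (L \<subseteq> A)" using prod_ind[OF fL, of "\<lambda>c. c \<in> A"] by auto
    finally show "of_bool (L \<subseteq> A) * (\<Prod>c\<in>C. wc p (c\<in>A)) =
       (\<Prod>c\<in>C. (if c \<in> L then of_bool (c\<in>A) else 1) * wc p (c\<in>A))" by simp
  qed
  also have "\<dots> = (\<Prod>c\<in>C. (if c \<in> L then of_bool True else 1) * wc p True
                     + (if c \<in> L then of_bool False else 1) * wc p False)"
    by (rule key_sum[OF assms(1)])
  also have "\<dots> = (\<Prod>c\<in>C. if c \<in> L then p else 1)"
    by (intro prod.cong) (auto simp: wc_def)
  also have "\<dots> = (\<Prod>c\<in>L. p)" by (rule prod_restr[OF assms])
  finally show ?thesis by simp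
qed

lemma choosable_main:
  fixes p :: real and m n0 n1 :: nat
  assumes p: "0 < p" "p < 1" and m: "m \<ge> 1" and n1: "n1 \<ge> 2"
    and bound: "real n0 * (1-p)^m + real n1 * p^m \<le> 1"
  shows "choosable (Kbip_V n0 n1) Kbip_E m"
  unfolding choosable_def
proof (intro allI impI)
  fix S :: "nat + nat \<Rightarrow> nat set"
  assume S: "\<forall>v\<in>Kbip_V n0 n1. finite (S v) \<and> m \<le> card (S v)"
  define C where "C = (\<Union>v\<in>Kbip_V n0 n1. S v)"
  have finV: "finite (Kbip_V n0 n1)" by (simp add: Kbip_V_def)
  have fC: "finite C" unfolding C_def using S finV by auto
  have S0: "S (Inl i) \<subseteq> C" "finite (S (Inl i))" "m \<le> card (S (Inl i))" if "i < n0" for i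
    using that S unfolding C_def Kbip_V_def by auto
  have S1: "S (Inr j) \<subseteq> C" "finite (S (Inr j))" "m \<le> card (S (Inr j))" if "j < n1" for j
    using that S unfolding C_def Kbip_V_def by auto
  define w where "w A = (\<Prod>c\<in>C. wc p (c\<in>A))" for A
  define X where "X A = (\<Sum>i<n0. (of_bool (S (Inl i) \<inter> A = {}) :: real))
                       + (\<Sum>j<n1. (of_bool (S (Inr j) \<subseteq> A) :: real))" for A
  have wpos: "w A > 0" for A unfolding w_def using p by (intro prod_pos) (auto simp: wc_def)
  have "\<exists>A\<in>Pow C. X A < 1"
  proof (rule ccontr)
    assume "\<not> ?thesis"
    hence ge: "X A \<ge> 1" if "A \<in> Pow C" for A using that by (simp add: not_less)
    have "(\<Sum>A\<in>Pow C. w A * X A) =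
       (\<Sum>i<n0. \<Sum>A\<in>Pow C. of_bool (S (Inl i) \<inter> A = {}) * w A)
     + (\<Sum>j<n1. \<Sum>A\<in>Pow C. of_bool (S (Inr j) \<subseteq> A) * w A)"
    proof -
      have "(\<Sum>A\<in>Pow C. w A * X A) = (\<Sum>A\<in>Pow C. (\<Sum>i<n0. of_bool (S (Inl i) \<inter> A = {}) * w A)
              + (\<Sum>j<n1. of_bool (S (Inr j) \<subseteq> A) * w A))"
        unfolding X_def by (intro sum.cong refl) (simp add: distrib_left sum_distrib_left mult.commute)
      also have "\<dots> = (\<Sum>A\<in>Pow C. \<Sum>i<n0. of_bool (S (Inl i) \<inter> A = {}) * w A)
              + (\<Sum>A\<in>Pow C. \<Sum>j<n1. of_bool (S (Inr j) \<subseteq> A) * w A)"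
        by (rule sum.distrib)
      also have "\<dots> = (\<Sum>i<n0. \<Sum>A\<in>Pow C. of_bool (S (Inl i) \<inter> A = {}) * w A)
     + (\<Sum>j<n1. \<Sum>A\<in>Pow C. of_bool (S (Inr j) \<subseteq> A) * w A)"
        by (intro arg_cong2[where f="(+)"] sum.swap)
      finally show ?thesis .
    qed
    also have "\<dots> = (\<Sum>i<n0. (1-p) ^ card (S (Inl i))) + (\<Sum>j<n1. p ^ card (S (Inr j)))"
      unfolding w_def
      by (intro arg_cong2[where f="(+)"] sum.cong refl sum_w0 sum_w1 fC S0 S1) auto
    also have "\<dots> \<le> (\<Sum>i<n0. (1-p) ^ m) + (\<Sum>j<n1. p ^ m)"
      using S0 S1 p by (intro add_mono sum_mono power_decreasing) auto
    also have "\<dots> \<le> 1" using bound by simp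
    also have "\<dots> = (\<Sum>A\<in>Pow C. w A)" unfolding w_def using sum_w[OF fC] by simp
    finally have le: "(\<Sum>A\<in>Pow C. w A * (X A - 1)) \<le> 0"
      by (simp add: right_diff_distrib sum_subtractf)
    have XC: "X C \<ge> real n1" unfolding X_def using S1
      by (simp add: sum_nonneg)
    have "(\<Sum>A\<in>Pow C. w A * (X A - 1)) > 0"
    proof (rule sum_pos2[of _ C])
      show "finite (Pow C)" using fC by simp
      show "C \<in> Pow C" by simp
      show "0 < w C * (X C - 1)" using wpos[of C] XC n1 by simp
      show "\<And>i. i \<in> Pow C \<Longrightarrow> 0 \<le> w i * (X i - 1)"
        using ge wpos by (simp add: less_imp_le)
    qed
    with le show False by simp
  qed
  then obtain A where A: "A \<subseteq> C" "X A < 1" by auto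
  have nn: "0 \<le> (\<Sum>i<n0. (of_bool (S (Inl i) \<inter> A = {}) :: real))"
           "0 \<le> (\<Sum>j<n1. (of_bool (S (Inr j) \<subseteq> A) :: real))" by (auto intro: sum_nonneg)
  have g0: "S (Inl i) \<inter> A \<noteq> {}" if "i < n0" for i
  proof
    assume "S (Inl i) \<inter> A = {}"
    hence "1 \<le> (\<Sum>i<n0. (of_bool (S (Inl i) \<inter> A = {}) :: real))"
    proof -
      have "(of_bool (S (Inl i) \<inter> A = {}) :: real) \<le> (\<Sum>i<n0. (of_bool (S (Inl i) \<inter> A = {}) :: real))"
        by (rule member_le_sum) (use that in auto)
      with \<open>S (Inl i) \<inter> A = {}\<close> show ?thesis by simp
    qed
    with nn A show False unfolding X_def by simp
  qed
  have g1: "\<not> S (Inr j) \<subseteq> A" if "j < n1" for j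
  proof
    assume "S (Inr j) \<subseteq> A"
    hence "1 \<le> (\<Sum>j<n1. (of_bool (S (Inr j) \<subseteq> A) :: real))"
    proof -
      have "(of_bool (S (Inr j) \<subseteq> A) :: real) \<le> (\<Sum>j<n1. (of_bool (S (Inr j) \<subseteq> A) :: real))"
        by (rule member_le_sum) (use that in auto)
      with \<open>S (Inr j) \<subseteq> A\<close> show ?thesis by simp
    qed
    with nn A show False unfolding X_def by simp
  qed
  define f where "f v = (case v of Inl i \<Rightarrow> (SOME c. c \<in> S v \<inter> A) | Inr j \<Rightarrow> (SOME c. c \<in> S v - A))" for v
  have fl: "f (Inl i) \<in> S (Inl i) \<inter> A" if "i < n0" for i
    unfolding f_def using g0[OF that] by (metis Int_iff ex_in_conv someI sum.simps(5))
  have fr: "f (Inr j) \<in> S (Inr j) - A" if "j < n1" for j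
  proof -
    obtain c where "c \<in> S (Inr j) - A" using g1[OF \<open>j < n1\<close>] by auto
    then have "(SOME c. c \<in> S (Inr j) - A) \<in> S (Inr j) - A" by (rule someI)
    then show ?thesis unfolding f_def by simp
  qed
  show "\<exists>f. (\<forall>v\<in>Kbip_V n0 n1. f v \<in> S v) \<and> (\<forall>u\<in>Kbip_V n0 n1. \<forall>v\<in>Kbip_V n0 n1. Kbip_E u v \<longrightarrow> f u \<noteq> f v)"
  proof (intro exI conjI ballI impI)
    fix v assume "v \<in> Kbip_V n0 n1"
    then show "f v \<in> S v" using fl fr unfolding Kbip_V_def by auto
  next
    fix u v assume "u \<in> Kbip_V n0 n1" "v \<in> Kbip_V n0 n1" "Kbip_E u v"
    then show "f u \<noteq> f v" using fl fr unfolding Kbip_V_def Kbip_E_def by (auto, metis, metis)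
  qed
qed

theorem theorem2:
  fixes n0 n1 :: nat and k x0 :: real
  assumes "2 \<le> n0" and "n0 \<le> n1"
    and "k = log 2 (real n1) / log 2 (real n0)"
    and "x0 \<ge> 1" and "x0 - 1 - x0 powr ((k - 1) / k) = 0"
  shows "int (ch_Kbip n0 n1) \<le> \<lceil>log 2 (real n1) / log 2 x0\<rceil> + 1"
proof -
  define L0 where "L0 = log 2 (real n0)"
  define L1 where "L1 = log 2 (real n1)"
  have n0r: "real n0 \<ge> 2" using assms(1) by simp
  have n1r: "real n1 \<ge> real n0" using assms(2) by simp
  have L0: "L0 \<ge> 1" unfolding L0_def using n0r by simp
  have L1: "L1 \<ge> L0" unfolding L0_def L1_def using n0r n1r by simp
  have k: "k = L1 / L0" using assms(3) L0_def L1_def by simp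
  have k1: "k \<ge> 1" using k L0 L1 by simp
  define e where "e = (k - 1) / k"
  have e0: "e \<ge> 0" unfolding e_def using k1 by simp
  have e1: "e - 1 = - 1 / k" unfolding e_def using k1 by (simp add: field_simps)
  have xe: "x0 - 1 = x0 powr e" using assms(5) e_def by simp
  have "x0 powr e \<ge> 1" using assms(4) e0 by (simp add: ge_one_powr_ge_zero)
  hence x2: "x0 \<ge> 2" using xe by simp
  define a where "a = log 2 x0"
  have a1: "a \<ge> 1" unfolding a_def using x2 by simp
  have x0a: "x0 = 2 powr a" unfolding a_def using x2 by simp
  define T where "T = L1 / a"
  have Tpos: "T > 0" unfolding T_def using L0 L1 a1 by simp
  define t where "t = \<lceil>T\<rceil>"
  have tT: "real_of_int t \<ge> T" unfolding t_def by simp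
  have t0: "t \<ge> 0" using tT Tpos by linarith
  define tn where "tn = nat t"
  have tnr: "real tn = real_of_int t" unfolding tn_def using t0 by simp
  have tna: "real tn * a \<ge> L1" using tT tnr a1 unfolding T_def by (simp add: field_simps)
  define m where "m = tn + 1"
  define p where "p = 1 / x0"
  have p0: "0 < p" "p < 1" unfolding p_def using x2 by auto
  have n1x: "real n1 \<le> x0 ^ tn"
  proof -
    have "real n1 = 2 powr L1" unfolding L1_def using n0r n1r by simp
    also have "\<dots> \<le> 2 powr (a * real tn)" using tna by (simp add: mult.commute)
    also have "\<dots> = x0 ^ tn" unfolding x0a by (simp add: powr_powr [symmetric] powr_realpow)
    finally show ?thesis .
  qed
  have B1: "real n1 * p ^ m \<le> 1 / x0"
  proof -
    have "real n1 * p ^ m = real n1 / x0 ^ tn / x0" unfolding m_def p_def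
      by (simp add: power_one_over field_simps)
    also have "\<dots> \<le> 1 / x0"
    proof -
      have "x0 ^ tn > 0" using x2 by simp
      hence "real n1 / x0 ^ tn \<le> 1" using n1x by (simp add: divide_le_eq_1)
      thus ?thesis using x2 by (intro divide_right_mono) auto
    qed
    finally show ?thesis .
  qed
  have omp: "1 - p = x0 powr (- 1 / k)"
  proof -
    have "1 - p = (x0 - 1) / x0" unfolding p_def using x2 by (simp add: field_simps)
    also have "\<dots> = x0 powr e / x0 powr 1" using xe x2 by simp
    also have "\<dots> = x0 powr (e - 1)" using x2 by (simp add: powr_diff)
    finally show ?thesis using e1 by simp
  qed
  have n0x: "real n0 * (1 - p) ^ tn \<le> 1"
  proof -
    have "(1 - p) ^ tn = 2 powr (- (a * real tn) / k)"
    proof -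
      have "(1 - p) ^ tn = ((2 powr a) powr (- 1 / k)) ^ tn" unfolding omp x0a ..
      also have "\<dots> = (2 powr (- a / k)) ^ tn" by (simp add: powr_powr)
      also have "\<dots> = 2 powr (real tn * (- a / k))" by (simp add: powr_realpow [symmetric] powr_powr [symmetric]) (simp add: powr_powr mult.commute)
      also have "\<dots> = 2 powr (- (a * real tn) / k)" by (simp add: field_simps)
      finally show ?thesis .
    qed
    moreover have "real n0 = 2 powr (L1 / k)" unfolding k L0_def using L0 L1 n0r
      by simp
    moreover have "2 powr (L1 / k) * 2 powr (- (a * real tn) / k) \<le> 1"
    proof -
      have "2 powr (L1 / k) * 2 powr (- (a * real tn) / k) = 2 powr ((L1 - a * real tn) / k)"
        by (simp add: powr_add [symmetric] diff_divide_distrib)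
      also have "\<dots> \<le> 2 powr 0" using tna k1 by (intro powr_mono) (auto simp: divide_nonpos_pos mult.commute)
      finally show ?thesis by simp
    qed
    ultimately show ?thesis by simp
  qed
  have B0: "real n0 * (1 - p) ^ m \<le> 1 - p"
  proof -
    have "real n0 * (1 - p) ^ m = (real n0 * (1 - p) ^ tn) * (1 - p)" unfolding m_def by simp
    also have "\<dots> \<le> 1 * (1 - p)" using n0x p0 by (intro mult_right_mono) auto
    finally show ?thesis by simp
  qed
  have bound: "real n0 * (1-p)^m + real n1 * p^m \<le> 1" using B0 B1 unfolding p_def by simp
  have ch: "choosable (Kbip_V n0 n1) Kbip_E m"
    by (rule choosable_main[OF p0 _ _ bound]) (use assms in \<open>auto simp: m_def\<close>)
  have "ch_Kbip n0 n1 \<le> m" unfolding ch_Kbip_def choice_number_def using ch by (rule Least_le)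
  hence "int (ch_Kbip n0 n1) \<le> t + 1" unfolding m_def tn_def using t0 by simp
  thus ?thesis unfolding t_def T_def L1_def a_def .
qed

end
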